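(* Let $m\ge 1$, $n=2m$, and let $\gamma(X_0,X_1,\ldots,X_{m-1})\in\mathbb{F}_2[X_0,\ldots,X_{m-1}]$ be a reduced polynomial of algebraic degree $d$. Define the Boolean function $f:\mathbb{F}_2^n\to\mathbb{F}_2$ by $$f(x_0,\ldots,x_{n-1})=\sum_{i=0}^{m-1}x_ix_{i+m}+\gamma(x_0+x_m,\,x_1+x_{m+1},\,\ldots,\,x_{m-1}+x_{2m-1}).$$ Then $f$ is a bent function. Moreover, if $\gamma$ is rotation symmetric (i.e. $\gamma(X_0,X_1,\ldots,X_{m-1})=\gamma(X_1,\ldots,X_{m-1},X_0)$), then $f$ is a rotation symmetric bent function on $\mathbb{F}_2^n$. Furthermore, if $d\ge 2$, then $f$ has algebraic degree $d$.
   Context: Every Boolean function $f:\mathbb{F}_2^n\to\mathbb{F}_2$ is identified with its algebraic normal form, a reduced polynomial $\sum_{u\in\mathbb{F}_2^n}c_u\prod_{i=0}^{n-1}x_i^{u_i}$ with $c_u\in\mathbb{F}_2$ (each variable appears with exponent at most 1); its algebraic degree is the largest number of variables in a monomial with nonzero coefficient. $f$ is rotation symmetric if $f(x_1,x_2,\ldots,x_{n-1},x_0)=f(x_0,x_1,\ldots,x_{n-1})$ for all $x\in\mathbb{F}_2^n$. The Walsh transform is $\mathcal{W}_f(b)=\sum_{x\in\mathbb{F}_2^n}(-1)^{f(x)+\sum_i x_ib_i}$, and $f$ is bent if $\mathcal{W}_f(b)=\pm 2^{n/2}$ for all $b\in\mathbb{F}_2^n$. *)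

theory Defs
  imports Main
begin

text \<open>Vectors of F_2^n are modelled as functions nat => bool that vanish
outside {0..<n}; a Boolean function on F_2^n is a function
(nat => bool) => bool, only its values on vecs n matter.\<close>

definition vecs :: "nat \<Rightarrow> (nat \<Rightarrow> bool) set" where
  "vecs n = {x. \<forall>i. n \<le> i \<longrightarrow> \<not> x i}"

text \<open>A reduced polynomial in the variables X_0..X_{n-1} over F_2 is given by its
coefficient function on monomials, a monomial being the set u of indices of the
variables occurring in it.\<close>

definition is_anf :: "nat \<Rightarrow> (nat set \<Rightarrow> bool) \<Rightarrow> bool" where
  "is_anf n c \<longleftrightarrow> (\<forall>u. c u \<longrightarrow> u \<subseteq> {..<n})"

definition anf_eval :: "nat \<Rightarrow> (nat set \<Rightarrow> bool) \<Rightarrow> (nat \<Rightarrow> bool) \<Rightarrow> bool" where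
  "anf_eval n c x = odd (card {u. u \<subseteq> {..<n} \<and> c u \<and> (\<forall>i\<in>u. x i)})"

text \<open>Algebraic degree of a polynomial (the zero polynomial gets degree 0).\<close>
definition anf_degree :: "(nat set \<Rightarrow> bool) \<Rightarrow> nat" where
  "anf_degree c = Max (insert 0 (card ` {u. c u}))"

definition anf_of :: "nat \<Rightarrow> ((nat \<Rightarrow> bool) \<Rightarrow> bool) \<Rightarrow> (nat set \<Rightarrow> bool)" where
  "anf_of n f = (THE c. is_anf n c \<and> (\<forall>x\<in>vecs n. anf_eval n c x = f x))"

definition alg_degree :: "nat \<Rightarrow> ((nat \<Rightarrow> bool) \<Rightarrow> bool) \<Rightarrow> nat" where
  "alg_degree n f = anf_degree (anf_of n f)"

definition rot :: "nat \<Rightarrow> (nat \<Rightarrow> bool) \<Rightarrow> (nat \<Rightarrow> bool)" where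
  "rot n x = (\<lambda>i. if i < n then x ((i + 1) mod n) else False)"

definition rotation_symmetric :: "nat \<Rightarrow> ((nat \<Rightarrow> bool) \<Rightarrow> bool) \<Rightarrow> bool" where
  "rotation_symmetric n f \<longleftrightarrow> (\<forall>x\<in>vecs n. f (rot n x) = f x)"

definition walsh :: "nat \<Rightarrow> ((nat \<Rightarrow> bool) \<Rightarrow> bool) \<Rightarrow> (nat \<Rightarrow> bool) \<Rightarrow> int" where
  "walsh n f b = (\<Sum>x\<in>vecs n. (-1::int) ^ (of_bool (f x) + card {i. i < n \<and> x i \<and> b i}))"

definition bent :: "nat \<Rightarrow> ((nat \<Rightarrow> bool) \<Rightarrow> bool) \<Rightarrow> bool" where
  "bent n f \<longleftrightarrow> (\<forall>b\<in>vecs n. \<bar>walsh n f b\<bar> = 2 ^ (n div 2))"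

end

theory Submission
  imports Defs "HOL-Library.FuncSet"
begin


lemma par_xor:
  assumes "finite A" "finite B"
  shows "odd (card ((A - B) \<union> (B - A))) = (odd (card A) \<noteq> odd (card B))"
proof -
  have 1: "card A = card (A - B) + card (A \<inter> B)"
  proof -
    have "A = (A - B) \<union> (A \<inter> B)" by blast
    then have "card A = card ((A - B) \<union> (A \<inter> B))" by simp
    also have "\<dots> = card (A - B) + card (A \<inter> B)" using assms by (intro card_Un_disjoint) auto
    finally show ?thesis .
  qed
  have 2: "card B = card (B - A) + card (A \<inter> B)"
  proof -
    have "B = (B - A) \<union> (A \<inter> B)" by blast
    then have "card B = card ((B - A) \<union> (A \<inter> B))" by simp
    also have "\<dots> = card (B - A) + card (A \<inter> B)" using assms by (intro card_Un_disjoint) auto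
    finally show ?thesis .
  qed
  have 3: "card ((A - B) \<union> (B - A)) = card (A - B) + card (B - A)"
    using assms by (intro card_Un_disjoint) auto
  show ?thesis using 1 2 3 by presburger
qed

definition Pm :: "nat \<Rightarrow> (nat \<Rightarrow> bool) \<Rightarrow> bool" where
  "Pm m A = odd (card {i. i < m \<and> A i})"

lemma Pm_xor: "Pm m (\<lambda>i. A i \<noteq> B i) = (Pm m A \<noteq> Pm m B)"
proof -
  have "{i. i < m \<and> (A i \<noteq> B i)} = ({i. i < m \<and> A i} - {i. i < m \<and> B i}) \<union> ({i. i < m \<and> B i} - {i. i < m \<and> A i})"
    by auto
  then show ?thesis unfolding Pm_def by (simp add: par_xor)
qed

lemma Pm_cong: "(\<And>i. i < m \<Longrightarrow> A i = B i) \<Longrightarrow> Pm m A = Pm m B"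
  unfolding Pm_def by (metis (mono_tags, lifting) Collect_cong)

definition sg :: "bool \<Rightarrow> int" where "sg p = (if p then -1 else 1)"

lemma sg_xor: "sg (a \<noteq> b) = sg a * sg b" unfolding sg_def by auto

lemma pow_sg: "(-1::int) ^ (of_bool p + k) = sg (p \<noteq> odd k)"
  unfolding sg_def by (cases p) auto

lemma vecs_eq: "vecs m = (\<lambda>A i. i \<in> A) ` Pow {..<m}"
proof
  show "vecs m \<subseteq> (\<lambda>A i. i \<in> A) ` Pow {..<m}"
  proof
    fix x assume "x \<in> vecs m"
    then have "x = (\<lambda>i. i \<in> {i. x i})" "{i. x i} \<in> Pow {..<m}"
      unfolding vecs_def by (auto simp: not_le[symmetric])
    then show "x \<in> (\<lambda>A i. i \<in> A) ` Pow {..<m}" by blast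
  qed
qed (auto simp: vecs_def)

lemma finite_vecs: "finite (vecs m)"
  by (simp add: vecs_eq)

lemma vecs_Suc: "vecs (Suc m) = vecs m \<union> (\<lambda>X. X(m := True)) ` vecs m"
proof
  show "vecs (Suc m) \<subseteq> vecs m \<union> (\<lambda>X. X(m := True)) ` vecs m"
  proof
    fix x assume x: "x \<in> vecs (Suc m)"
    show "x \<in> vecs m \<union> (\<lambda>X. X(m := True)) ` vecs m"
    proof (cases "x m")
      case True
      have "x = (x(m:=False))(m:=True)" using True by (simp add: fun_eq_iff)
      moreover have "x(m:=False) \<in> vecs m"
        using x unfolding vecs_def by auto
      ultimately show ?thesis by blast
    next
      case False
      have "x \<in> vecs m" unfolding vecs_def
      proof (intro CollectI allI impI)
        fix i assume "m \<le> i" then show "\<not> x i" using x False unfolding vecs_def by (cases "i = m") auto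
      qed
      then show ?thesis by blast
    qed
  qed
qed (auto simp: vecs_def)

lemma sum_vecs_Suc:
  "(\<Sum>X\<in>vecs (Suc m). g X) = (\<Sum>X\<in>vecs m. g X) + (\<Sum>X\<in>vecs m. g (X(m := True)))"
proof -
  have inj: "inj_on (\<lambda>X. X(m := True)) (vecs m)"
  proof (rule inj_onI)
    fix X Y assume X: "X \<in> vecs m" and Y: "Y \<in> vecs m" and eq: "X(m := True) = Y(m := True)"
    show "X = Y"
    proof
      fix i show "X i = Y i" using fun_cong[OF eq, of i] X Y by (cases "i = m") (auto simp: vecs_def)
    qed
  qed
  have disj: "vecs m \<inter> (\<lambda>X. X(m := True)) ` vecs m = {}"
    unfolding vecs_def by auto
  show ?thesis
    unfolding vecs_Suc
    by (simp add: sum.union_disjoint finite_vecs disj sum.reindex[OF inj])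
qed

lemma charsum:
  "(\<Sum>X\<in>vecs m. sg (Pm m (\<lambda>i. X i \<and> T i))) = (if \<forall>i<m. \<not> T i then 2 ^ m else 0)"
proof (induction m)
  case 0
  have "vecs 0 = {\<lambda>i. False}" unfolding vecs_def by auto
  then show ?case by (simp add: Pm_def sg_def)
next
  case (Suc m)
  have a: "Pm (Suc m) (\<lambda>i. X i \<and> T i) = Pm m (\<lambda>i. X i \<and> T i)" if "X \<in> vecs m" for X
  proof -
    have "{i. i < Suc m \<and> X i \<and> T i} = {i. i < m \<and> X i \<and> T i}"
      using that unfolding vecs_def by (auto simp: less_Suc_eq)
    then show ?thesis unfolding Pm_def by simp
  qed
  have b: "Pm (Suc m) (\<lambda>i. (X(m:=True)) i \<and> T i) = (Pm m (\<lambda>i. X i \<and> T i) \<noteq> T m)" if "X \<in> vecs m" for X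
  proof (cases "T m")
    case True
    have "{i. i < Suc m \<and> (X(m:=True)) i \<and> T i} = insert m {i. i < m \<and> X i \<and> T i}"
      using that True unfolding vecs_def by (auto simp: less_Suc_eq)
    then show ?thesis unfolding Pm_def using True by simp
  next
    case False
    have "{i. i < Suc m \<and> (X(m:=True)) i \<and> T i} = {i. i < m \<and> X i \<and> T i}"
      using that False unfolding vecs_def by (auto simp: less_Suc_eq)
    then show ?thesis unfolding Pm_def using False by simp
  qed
  have "(\<Sum>X\<in>vecs (Suc m). sg (Pm (Suc m) (\<lambda>i. X i \<and> T i)))
     = (\<Sum>X\<in>vecs m. sg (Pm m (\<lambda>i. X i \<and> T i))) * (1 + sg (T m))"
  proof -
    have "(\<Sum>X\<in>vecs m. sg (Pm (Suc m) (\<lambda>i. (X(m:=True)) i \<and> T i)))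
        = (\<Sum>X\<in>vecs m. sg (Pm m (\<lambda>i. X i \<and> T i))) * sg (T m)"
      unfolding sum_distrib_right by (rule sum.cong) (simp_all only: b sg_xor)
    moreover have "(\<Sum>X\<in>vecs m. sg (Pm (Suc m) (\<lambda>i. X i \<and> T i)))
        = (\<Sum>X\<in>vecs m. sg (Pm m (\<lambda>i. X i \<and> T i)))"
      by (rule sum.cong) (simp_all only: a)
    ultimately show ?thesis unfolding sum_vecs_Suc
      by (simp only: distrib_left mult_1_right)
  qed
  then show ?case using Suc.IH by (auto simp: sg_def less_Suc_eq)
qed

lemma anf_eval_xor:
  "anf_eval n (\<lambda>u. c u \<noteq> c' u) x = (anf_eval n c x \<noteq> anf_eval n c' x)"
proof -
  have fin: "finite {u. u \<subseteq> {..<n} \<and> P u}" for P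
    by (rule finite_subset[of _ "Pow {..<n}"]) auto
  have "{u. u \<subseteq> {..<n} \<and> (c u \<noteq> c' u) \<and> (\<forall>i\<in>u. x i)} =
    ({u. u \<subseteq> {..<n} \<and> c u \<and> (\<forall>i\<in>u. x i)} - {u. u \<subseteq> {..<n} \<and> c' u \<and> (\<forall>i\<in>u. x i)}) \<union>
    ({u. u \<subseteq> {..<n} \<and> c' u \<and> (\<forall>i\<in>u. x i)} - {u. u \<subseteq> {..<n} \<and> c u \<and> (\<forall>i\<in>u. x i)})"
    by auto
  then show ?thesis unfolding anf_eval_def by (simp add: par_xor fin)
qed

lemma anf_zero:
  assumes "is_anf n e" "\<And>x. x \<in> vecs n \<Longrightarrow> \<not> anf_eval n e x"
  shows "\<not> e u"
proof
  assume "e u"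
  obtain u0 where u0: "e u0" "\<And>v. e v \<Longrightarrow> card u0 \<le> card v"
    using ex_has_least_nat[of e u card] \<open>e u\<close> by blast
  have sub: "u0 \<subseteq> {..<n}" using assms(1) u0(1) unfolding is_anf_def by blast
  then have fin: "finite u0" using finite_subset by blast
  have "{v. v \<subseteq> {..<n} \<and> e v \<and> (\<forall>i\<in>v. i \<in> u0)} = {u0}"
  proof
    show "{v. v \<subseteq> {..<n} \<and> e v \<and> (\<forall>i\<in>v. i \<in> u0)} \<subseteq> {u0}"
    proof
      fix v assume "v \<in> {v. v \<subseteq> {..<n} \<and> e v \<and> (\<forall>i\<in>v. i \<in> u0)}"
      then have "v \<subseteq> {..<n}" "e v" "\<forall>i\<in>v. i \<in> u0" by auto
      then have "v = u0" using u0(2)[of v] fin by (metis card_seteq subsetI)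
      then show "v \<in> {u0}" by simp
    qed
  qed (use u0 sub in auto)
  then have "anf_eval n e (\<lambda>i. i \<in> u0)" unfolding anf_eval_def by simp
  moreover have "(\<lambda>i. i \<in> u0) \<in> vecs n" using sub unfolding vecs_def by auto
  ultimately show False using assms(2) by blast
qed

lemma anf_of_eq:
  assumes "is_anf n c" "\<And>x. x \<in> vecs n \<Longrightarrow> anf_eval n c x = f x"
  shows "anf_of n f = c"
  unfolding anf_of_def
proof (rule the_equality)
  show "is_anf n c \<and> (\<forall>x\<in>vecs n. anf_eval n c x = f x)" using assms by blast
next
  fix c' assume h: "is_anf n c' \<and> (\<forall>x\<in>vecs n. anf_eval n c' x = f x)"
  have "\<not> (c' u \<noteq> c u)" for u
  proof (rule anf_zero[of n])
    show "is_anf n (\<lambda>u. c' u \<noteq> c u)" using h assms(1) unfolding is_anf_def by blast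
    fix x assume x: "x \<in> vecs n"
    have "anf_eval n (\<lambda>u. c' u \<noteq> c u) x = (anf_eval n c' x \<noteq> anf_eval n c x)"
      by (rule anf_eval_xor)
    then show "\<not> anf_eval n (\<lambda>u. c' u \<noteq> c u) x" using h assms(2) x by simp
  qed
  then show "c' = c" by blast
qed



lemma walsh_val:
  fixes m n :: nat and g :: "(nat \<Rightarrow> bool) \<Rightarrow> bool" and f :: "(nat \<Rightarrow> bool) \<Rightarrow> bool"
  assumes n: "n = 2 * m"
    and f: "\<And>x. f x = (odd (card {i. i < m \<and> x i \<and> x (i + m)})
                 \<noteq> g (\<lambda>i. if i < m then x i \<noteq> x (i + m) else False))"
  shows "walsh n f b = sg (g (\<lambda>i. i < m \<and> (b i = b (i+m))) \<noteq> Pm m (\<lambda>i. (i < m \<and> (b i = b (i+m))) \<and> b (i+m))) * 2 ^ m"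
proof -
  define H where "H p = (\<lambda>i. if i < m then fst p i else if i < 2*m then (fst p (i-m) \<noteq> snd p (i-m)) else False)"
    for p :: "(nat \<Rightarrow> bool) \<times> (nat \<Rightarrow> bool)"
  define H' where "H' x = ((\<lambda>i. i < m \<and> x i), (\<lambda>i. i < m \<and> (x i \<noteq> x (i+m))))" for x :: "nat \<Rightarrow> bool"
  have bij: "bij_betw H (vecs m \<times> vecs m) (vecs n)"
  proof (rule bij_betw_byWitness[where f'=H'])
    show "\<forall>a\<in>vecs m \<times> vecs m. H' (H a) = a"
      unfolding H_def H'_def vecs_def by (auto simp: fun_eq_iff not_le[symmetric])
    show "\<forall>a'\<in>vecs n. H (H' a') = a'"
    proof
      fix x assume x: "x \<in> vecs n"
      show "H (H' x) = x"
      proof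
        fix i
        show "H (H' x) i = x i"
        proof (cases "i < m")
          case True then show ?thesis unfolding H_def H'_def by simp
        next
          case False
          show ?thesis
          proof (cases "i < 2*m")
            case True
            then have e: "i - m + m = i" "i - m < m" using False by auto
            show ?thesis using False True unfolding H_def H'_def by (simp add: e) blast
          next
            case F2: False
            then show ?thesis using x n False unfolding H_def H'_def vecs_def by auto
          qed
        qed
      qed
    qed
    show "H ` (vecs m \<times> vecs m) \<subseteq> vecs n" unfolding H_def vecs_def n by auto
    show "H' ` vecs n \<subseteq> vecs m \<times> vecs m" unfolding H'_def vecs_def by auto
  qed
  define T where "T S i = ((\<not> S i) \<noteq> (b i \<noteq> b (i+m)))" for S :: "nat \<Rightarrow> bool" and i
  define k where "k S = sg (g S \<noteq> Pm m (\<lambda>i. S i \<and> b (i+m)))" for S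
  define trm where "trm x = (-1::int) ^ (of_bool (f x) + card {i. i < n \<and> x i \<and> b i})" for x
  have trm_H: "trm (H (X, S)) = sg (Pm m (\<lambda>i. X i \<and> T S i)) * k S"
    if X: "X \<in> vecs m" and S: "S \<in> vecs m" for X S
  proof -
    define x where "x = H (X, S)"
    have xlo: "x i = X i" if "i < m" for i using that unfolding x_def H_def by simp
    have xhi: "x (i + m) = (X i \<noteq> S i)" if "i < m" for i using that unfolding x_def H_def by simp
    have a: "card {i. i < n \<and> x i \<and> b i} = card {i. i < m \<and> X i \<and> b i} + card {i. i < m \<and> (X i \<noteq> S i) \<and> b (i+m)}"
    proof -
      have eq: "{i. i < n \<and> x i \<and> b i} = {i. i < m \<and> X i \<and> b i} \<union> (\<lambda>i. i + m) ` {i. i < m \<and> (X i \<noteq> S i) \<and> b (i+m)}"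
      proof
        show "{i. i < n \<and> x i \<and> b i} \<subseteq> {i. i < m \<and> X i \<and> b i} \<union> (\<lambda>i. i + m) ` {i. i < m \<and> (X i \<noteq> S i) \<and> b (i+m)}"
        proof
          fix i assume i: "i \<in> {i. i < n \<and> x i \<and> b i}"
          show "i \<in> {i. i < m \<and> X i \<and> b i} \<union> (\<lambda>i. i + m) ` {i. i < m \<and> (X i \<noteq> S i) \<and> b (i+m)}"
          proof (cases "i < m")
            case True then show ?thesis using i xlo by auto
          next
            case False
            have e: "i - m + m = i" and lt: "i - m < m" using i n False by auto
            have "x (i - m + m) = (X (i-m) \<noteq> S (i-m))" using xhi lt by blast
            then have "X (i-m) \<noteq> S (i-m)" "b (i - m + m)" using i e by auto
            then have mem: "i - m \<in> {i. i < m \<and> (X i \<noteq> S i) \<and> b (i+m)}" using lt by simp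
            show ?thesis by (rule UnI2, rule image_eqI[where f="\<lambda>i. i + m", OF e[symmetric] mem])
          qed
        qed
        show "{i. i < m \<and> X i \<and> b i} \<union> (\<lambda>i. i + m) ` {i. i < m \<and> (X i \<noteq> S i) \<and> b (i+m)} \<subseteq> {i. i < n \<and> x i \<and> b i}"
          using xlo xhi n by auto
      qed
      have "card ({i. i < m \<and> X i \<and> b i} \<union> (\<lambda>i. i + m) ` {i. i < m \<and> (X i \<noteq> S i) \<and> b (i+m)})
          = card {i. i < m \<and> X i \<and> b i} + card ((\<lambda>i. i + m) ` {i. i < m \<and> (X i \<noteq> S i) \<and> b (i+m)})"
        by (rule card_Un_disjoint) auto
      also have "card ((\<lambda>i. i + m) ` {i. i < m \<and> (X i \<noteq> S i) \<and> b (i+m)}) = card {i. i < m \<and> (X i \<noteq> S i) \<and> b (i+m)}"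
        by (rule card_image) (auto simp: inj_on_def)
      finally show ?thesis using eq by simp
    qed
    have bq: "odd (card {i. i < m \<and> x i \<and> x (i + m)}) = Pm m (\<lambda>i. X i \<and> (X i \<noteq> S i))"
    proof -
      have "{i. i < m \<and> x i \<and> x (i + m)} = {i. i < m \<and> X i \<and> (X i \<noteq> S i)}"
        using xlo xhi by auto
      then show ?thesis unfolding Pm_def by simp
    qed
    have c: "(\<lambda>i. if i < m then x i \<noteq> x (i + m) else False) = S"
    proof
      fix i show "(if i < m then x i \<noteq> x (i + m) else False) = S i"
        using xlo xhi S unfolding vecs_def by auto
    qed
    have PT: "Pm m (\<lambda>i. X i \<and> T S i) = (((Pm m (\<lambda>i. X i \<and> (X i \<noteq> S i)) \<noteq> Pm m (\<lambda>i. X i \<and> b i))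
        \<noteq> Pm m (\<lambda>i. (X i \<noteq> S i) \<and> b (i+m))) \<noteq> Pm m (\<lambda>i. S i \<and> b (i+m)))"
    proof -
      have "Pm m (\<lambda>i. X i \<and> T S i) = Pm m (\<lambda>i. (((X i \<and> (X i \<noteq> S i)) \<noteq> (X i \<and> b i)) \<noteq> ((X i \<noteq> S i) \<and> b (i+m))) \<noteq> (S i \<and> b (i+m)))"
        by (rule Pm_cong) (auto simp: T_def)
      then show ?thesis by (simp only: Pm_xor)
    qed
    have "trm x = sg (f x \<noteq> odd (card {i. i < n \<and> x i \<and> b i}))"
      unfolding trm_def by (rule pow_sg)
    also have "(f x \<noteq> odd (card {i. i < n \<and> x i \<and> b i})) = (Pm m (\<lambda>i. X i \<and> T S i) \<noteq> (g S \<noteq> Pm m (\<lambda>i. S i \<and> b (i+m))))"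
      unfolding f[of x] bq c a PT by (simp add: Pm_def) argo
    finally show ?thesis unfolding x_def k_def by (simp only: sg_xor)
  qed
  define S0 where "S0 i = (i < m \<and> (b i = b (i+m)))" for i
  have S0v: "S0 \<in> vecs m" unfolding S0_def vecs_def by auto
  have TS: "(\<forall>i<m. \<not> T S i) = (S = S0)" if "S \<in> vecs m" for S
  proof
    assume h: "\<forall>i<m. \<not> T S i"
    show "S = S0"
    proof
      fix i show "S i = S0 i"
        using h that unfolding T_def S0_def vecs_def by (cases "i < m") auto
    qed
  next
    assume "S = S0" then show "\<forall>i<m. \<not> T S i" unfolding T_def S0_def by auto
  qed
  have "walsh n f b = (\<Sum>x\<in>vecs n. trm x)" unfolding walsh_def trm_def by simp
  also have "\<dots> = (\<Sum>p\<in>vecs m \<times> vecs m. trm (H p))"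
    by (rule sum.reindex_bij_betw[OF bij, symmetric])
  also have "\<dots> = (\<Sum>X\<in>vecs m. \<Sum>S\<in>vecs m. trm (H (X, S)))"
    by (simp add: sum.cartesian_product)
  also have "\<dots> = (\<Sum>S\<in>vecs m. \<Sum>X\<in>vecs m. trm (H (X, S)))"
    by (rule sum.swap)
  also have "\<dots> = (\<Sum>S\<in>vecs m. k S * (\<Sum>X\<in>vecs m. sg (Pm m (\<lambda>i. X i \<and> T S i))))"
  proof (rule sum.cong)
    fix S assume S: "S \<in> vecs m"
    have "(\<Sum>X\<in>vecs m. trm (H (X, S))) = (\<Sum>X\<in>vecs m. sg (Pm m (\<lambda>i. X i \<and> T S i)) * k S)"
      by (rule sum.cong) (simp_all add: trm_H S)
    then show "(\<Sum>X\<in>vecs m. trm (H (X, S))) = k S * (\<Sum>X\<in>vecs m. sg (Pm m (\<lambda>i. X i \<and> T S i)))"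
      by (simp add: sum_distrib_left mult_ac)
  qed simp
  also have "\<dots> = (\<Sum>S\<in>vecs m. if S = S0 then k S * 2 ^ m else 0)"
    by (rule sum.cong) (auto simp: charsum TS)
  also have "\<dots> = k S0 * 2 ^ m"
    using S0v finite_vecs by simp
  finally show ?thesis unfolding k_def S0_def by simp
qed

lemma bent_gen:
  fixes m n :: nat and g :: "(nat \<Rightarrow> bool) \<Rightarrow> bool" and f :: "(nat \<Rightarrow> bool) \<Rightarrow> bool"
  assumes n: "n = 2 * m"
    and f: "\<And>x. f x = (odd (card {i. i < m \<and> x i \<and> x (i + m)})
                 \<noteq> g (\<lambda>i. if i < m then x i \<noteq> x (i + m) else False))"
  shows "bent n f"
  unfolding bent_def
proof
  fix b assume "b \<in> vecs n"
  show "\<bar>walsh n f b\<bar> = 2 ^ (n div 2)"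
    unfolding walsh_val[OF n f] using n by (simp add: sg_def abs_mult)
qed



lemma card_bij_pred:
  assumes "bij_betw h {..<m} {..<m}"
  shows "card {i. i < m \<and> P (h i)} = card {j. j < m \<and> P j}"
proof -
  have sub: "{i. i < m \<and> P (h i)} \<subseteq> {..<m}" by auto
  have inj: "inj_on h {i. i < m \<and> P (h i)}"
    using bij_betw_imp_inj_on[OF assms] inj_on_subset[OF _ sub] by blast
  have "h ` {i. i < m \<and> P (h i)} = {j. j < m \<and> P j}"
  proof
    show "h ` {i. i < m \<and> P (h i)} \<subseteq> {j. j < m \<and> P j}"
      using bij_betw_imp_surj_on[OF assms] by auto
    show "{j. j < m \<and> P j} \<subseteq> h ` {i. i < m \<and> P (h i)}"
    proof
      fix j assume j: "j \<in> {j. j < m \<and> P j}"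
      then have "j \<in> h ` {..<m}" using bij_betw_imp_surj_on[OF assms] by auto
      then obtain i where "i < m" "j = h i" by auto
      then show "j \<in> h ` {i. i < m \<and> P (h i)}" using j by auto
    qed
  qed
  then show ?thesis using card_image[OF inj] by simp
qed

lemma rot_gen:
  fixes m n :: nat and g :: "(nat \<Rightarrow> bool) \<Rightarrow> bool" and f :: "(nat \<Rightarrow> bool) \<Rightarrow> bool"
  assumes m: "m \<ge> 1" and n: "n = 2 * m"
    and f: "\<And>x. f x = (odd (card {i. i < m \<and> x i \<and> x (i + m)})
                 \<noteq> g (\<lambda>i. if i < m then x i \<noteq> x (i + m) else False))"
    and rs: "rotation_symmetric m g"
  shows "rotation_symmetric n f"
  unfolding rotation_symmetric_def
proof
  fix x assume x: "x \<in> vecs n"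
  define y where "y = rot n x"
  define h where "h i = (if i + 1 < m then i + 1 else 0)" for i :: nat
  have bij: "bij_betw h {..<m} {..<m}"
  proof (rule bij_betw_byWitness[where f'="\<lambda>j. if j = 0 then m - 1 else j - 1"])
    show "\<forall>a\<in>{..<m}. (if h a = 0 then m - 1 else h a - 1) = a" unfolding h_def by auto
    show "\<forall>a'\<in>{..<m}. h (if a' = 0 then m - 1 else a' - 1) = a'" unfolding h_def using m by auto
    show "h ` {..<m} \<subseteq> {..<m}" unfolding h_def using m by auto
    show "(\<lambda>j. if j = 0 then m - 1 else j - 1) ` {..<m} \<subseteq> {..<m}" using m by auto
  qed
  have ylo: "y i = (if i + 1 < m then x (h i) else x (h i + m))" if "i < m" for i
  proof (cases "i + 1 < m")
    case True then show ?thesis using that n unfolding y_def rot_def h_def by auto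
  next
    case False
    then have e: "i + 1 = m" using that by auto
    then show ?thesis using that n False e unfolding y_def rot_def h_def by auto
  qed
  have yhi: "y (i + m) = (if i + 1 < m then x (h i + m) else x (h i))" if "i < m" for i
  proof (cases "i + 1 < m")
    case True
    then have "(i + m + 1) mod n = i + 1 + m" using n by auto
    then show ?thesis using that True n unfolding y_def rot_def h_def by auto
  next
    case False
    then have "i + m + 1 = n" using that n by auto
    then have "(i + m + 1) mod n = 0" by simp
    then show ?thesis using that False n unfolding y_def rot_def h_def by auto
  qed
  have q: "(y i \<and> y (i + m)) = (x (h i) \<and> x (h i + m))" if "i < m" for i
    using ylo[OF that] yhi[OF that] by auto
  have z: "(y i \<noteq> y (i + m)) = (x (h i) \<noteq> x (h i + m))" if "i < m" for i
    using ylo[OF that] yhi[OF that] by auto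
  have card_eq: "card {i. i < m \<and> y i \<and> y (i + m)} = card {i. i < m \<and> x i \<and> x (i + m)}"
  proof -
    have "{i. i < m \<and> y i \<and> y (i + m)} = {i. i < m \<and> (x (h i) \<and> x (h i + m))}"
      using q by auto
    then show ?thesis using card_bij_pred[OF bij, of "\<lambda>j. x j \<and> x (j + m)"] by simp
  qed
  define zx where "zx = (\<lambda>i. if i < m then x i \<noteq> x (i + m) else False)"
  have zxv: "zx \<in> vecs m" unfolding zx_def vecs_def by auto
  have hmod: "(i + 1) mod m = h i" if "i < m" for i
  proof (cases "i + 1 < m")
    case False
    then have "i + 1 = m" using that by auto
    then show ?thesis unfolding h_def by simp
  qed (simp add: h_def)
  have zy: "(\<lambda>i. if i < m then y i \<noteq> y (i + m) else False) = rot m zx"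
  proof
    fix i show "(if i < m then y i \<noteq> y (i + m) else False) = rot m zx i"
      unfolding rot_def zx_def using z hmod by (cases "i < m") (auto simp: h_def)
  qed
  have "g (rot m zx) = g zx" using rs zxv unfolding rotation_symmetric_def by blast
  then show "f (rot n x) = f x"
    unfolding f[of y] f[of x] y_def[symmetric] card_eq zy zx_def[symmetric] by simp
qed



lemma odd_sum_card:
  fixes a :: "'a \<Rightarrow> nat"
  assumes "finite C"
  shows "odd (sum a C) = odd (card {u\<in>C. odd (a u)})"
  using assms
proof (induction C rule: finite_induct)
  case empty then show ?case by simp
next
  case (insert u C)
  show ?case
  proof (cases "odd (a u)")
    case True
    then have "{v\<in>insert u C. odd (a v)} = insert u {v\<in>C. odd (a v)}" by auto
    moreover have "u \<notin> {v\<in>C. odd (a v)}" using insert by auto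
    ultimately show ?thesis using insert True by simp
  next
    case False
    then have "{v\<in>insert u C. odd (a v)} = {v\<in>C. odd (a v)}" by auto
    then show ?thesis using insert False by simp
  qed
qed

lemma mod_lo: "(i::nat) < m \<Longrightarrow> i mod m = i" by simp
lemma mod_hi: "(i::nat) < m \<Longrightarrow> (i + m) mod m = i" by simp

lemma phi_mod:
  fixes \<phi> :: "nat \<Rightarrow> nat" and m :: nat
  assumes "\<phi> \<in> PiE u (\<lambda>i. {i, i + m})" "u \<subseteq> {..<m}" "i \<in> u"
  shows "\<phi> i mod m = i" "\<phi> i < 2 * m"
proof -
  have "\<phi> i \<in> {i, i + m}" using assms(1,3) by (auto simp: PiE_def Pi_def)
  moreover have "i < m" using assms by auto
  ultimately show "\<phi> i mod m = i" "\<phi> i < 2 * m" by (auto simp: mod_lo mod_hi)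
qed

lemma img_mod:
  fixes \<phi> :: "nat \<Rightarrow> nat" and m :: nat
  assumes "\<phi> \<in> PiE u (\<lambda>i. {i, i + m})" "u \<subseteq> {..<m}"
  shows "(\<lambda>j. j mod m) ` (\<phi> ` u) = u"
proof -
  have "(\<lambda>j. j mod m) ` (\<phi> ` u) = (\<lambda>i. \<phi> i mod m) ` u" by (simp add: image_image)
  also have "\<dots> = (\<lambda>i. i) ` u" using phi_mod(1)[OF assms] by (intro image_cong) auto
  finally show ?thesis by simp
qed

lemma phi_inj:
  fixes \<phi> :: "nat \<Rightarrow> nat" and m :: nat
  assumes "\<phi> \<in> PiE u (\<lambda>i. {i, i + m})" "u \<subseteq> {..<m}"
  shows "inj_on \<phi> u"
proof (rule inj_onI)
  fix i j assume "i \<in> u" "j \<in> u" "\<phi> i = \<phi> j"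
  then show "i = j" using phi_mod(1)[OF assms] by metis
qed

lemma PiE_img_inj:
  fixes m :: nat
  assumes "u \<subseteq> {..<m}"
  shows "inj_on (\<lambda>\<phi>. \<phi> ` u) (PiE u (\<lambda>i. {i, i + m}))"
proof (rule inj_onI)
  fix \<phi> \<psi> assume p: "\<phi> \<in> PiE u (\<lambda>i. {i, i + m})" and q: "\<psi> \<in> PiE u (\<lambda>i. {i, i + m})"
    and eq: "\<phi> ` u = \<psi> ` u"
  show "\<phi> = \<psi>"
  proof (rule PiE_ext[OF p q])
    fix i assume i: "i \<in> u"
    then have "\<phi> i \<in> \<psi> ` u" using eq by blast
    then obtain k where k: "k \<in> u" "\<phi> i = \<psi> k" by auto
    have "i = k" using phi_mod(1)[OF p assms i] phi_mod(1)[OF q assms k(1)] k(2) by simp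
    then show "\<phi> i = \<psi> i" using k by simp
  qed
qed

definition Tr :: "nat \<Rightarrow> nat set \<Rightarrow> nat set set" where
  "Tr m u = (\<lambda>\<phi>. \<phi> ` u) ` PiE u (\<lambda>i. {i, i + m})"

definition Gc :: "nat \<Rightarrow> (nat set \<Rightarrow> bool) \<Rightarrow> nat set \<Rightarrow> bool" where
  "Gc m c v = (\<exists>u. c u \<and> v \<in> Tr m u)"

definition Qc :: "nat \<Rightarrow> nat set \<Rightarrow> bool" where
  "Qc m v = (\<exists>i<m. v = {i, i + m})"

lemma Q_eval:
  assumes "m \<ge> 1"
  shows "anf_eval (2*m) (Qc m) x = odd (card {i. i < m \<and> x i \<and> x (i + m)})"
proof -
  have eq: "{v. v \<subseteq> {..<2*m} \<and> Qc m v \<and> (\<forall>j\<in>v. x j)} = (\<lambda>i. {i, i + m}) ` {i. i < m \<and> x i \<and> x (i + m)}"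
    unfolding Qc_def by auto
  have inj: "inj_on (\<lambda>i. {i, i + m}) {i. i < m \<and> x i \<and> x (i + m)}"
  proof (rule inj_onI)
    fix i j assume e: "{i, i + m} = {j, j + m}"
    then have "i \<in> {j, j + m}" "j \<in> {i, i + m}" by auto
    then show "i = j" using assms by auto
  qed
  show ?thesis unfolding anf_eval_def eq card_image[OF inj] ..
qed

lemma card_pair_x: "(i::nat) < m \<Longrightarrow> odd (card {j \<in> {i, i + m}. x j}) = (x i \<noteq> x (i + m))"
proof -
  assume "i < m"
  then have ne: "i \<noteq> i + m" by simp
  show ?thesis
  proof (cases "x i"; cases "x (i + m)")
    assume a: "x i" "x (i + m)"
    have e: "{j \<in> {i, i + m}. x j} = {i, i + m}" using a ne by auto
    show ?thesis unfolding e using ne \<open>x i\<close> \<open>x (i+m)\<close> by simp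
  next
    assume a: "x i" "\<not> x (i + m)"
    have e: "{j \<in> {i, i + m}. x j} = {i}" using a ne by auto
    show ?thesis unfolding e using \<open>x i\<close> \<open>\<not> x (i+m)\<close> by simp
  next
    assume a: "\<not> x i" "x (i + m)"
    have e: "{j \<in> {i, i + m}. x j} = {i + m}" using a ne by auto
    show ?thesis unfolding e using \<open>\<not> x i\<close> \<open>x (i+m)\<close> by simp
  next
    assume a: "\<not> x i" "\<not> x (i + m)"
    have e: "{j \<in> {i, i + m}. x j} = {}" using a ne by auto
    show ?thesis unfolding e using \<open>\<not> x i\<close> \<open>\<not> x (i+m)\<close> by simp
  qed
qed

lemma G_eval:
  assumes anf: "is_anf m c"
  shows "anf_eval (2*m) (Gc m c) x = anf_eval m c (\<lambda>i. if i < m then x i \<noteq> x (i + m) else False)"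
proof -
  define U where "U = {u. c u}"
  have Usub: "u \<subseteq> {..<m}" if "u \<in> U" for u using anf that unfolding U_def is_anf_def by auto
  have finU: "finite U" by (rule finite_subset[of _ "Pow {..<m}"]) (use Usub in auto)
  define Img where "Img u = (\<lambda>\<phi>. \<phi> ` u) ` PiE u (\<lambda>i. {j \<in> {i, i + m}. x j})" for u
  have eq: "{v. v \<subseteq> {..<2*m} \<and> Gc m c v \<and> (\<forall>j\<in>v. x j)} = (\<Union>u\<in>U. Img u)"
  proof
    show "{v. v \<subseteq> {..<2*m} \<and> Gc m c v \<and> (\<forall>j\<in>v. x j)} \<subseteq> (\<Union>u\<in>U. Img u)"
    proof
      fix v assume "v \<in> {v. v \<subseteq> {..<2*m} \<and> Gc m c v \<and> (\<forall>j\<in>v. x j)}"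
      then obtain u \<phi> where u: "c u" and p: "\<phi> \<in> PiE u (\<lambda>i. {i, i + m})" and v: "v = \<phi> ` u"
        and xv: "\<forall>j\<in>v. x j"
        unfolding Gc_def Tr_def by auto
      have "\<phi> \<in> PiE u (\<lambda>i. {j \<in> {i, i + m}. x j})"
        using p xv v by (auto simp: PiE_def Pi_def)
      then show "v \<in> (\<Union>u\<in>U. Img u)" using u v unfolding U_def Img_def by blast
    qed
    show "(\<Union>u\<in>U. Img u) \<subseteq> {v. v \<subseteq> {..<2*m} \<and> Gc m c v \<and> (\<forall>j\<in>v. x j)}"
    proof
      fix v assume "v \<in> (\<Union>u\<in>U. Img u)"
      then obtain u \<phi> where u: "u \<in> U" and p: "\<phi> \<in> PiE u (\<lambda>i. {j \<in> {i, i + m}. x j})" and v: "v = \<phi> ` u"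
        unfolding Img_def by auto
      have p': "\<phi> \<in> PiE u (\<lambda>i. {i, i + m})" using p by (auto simp: PiE_def Pi_def)
      have "v \<subseteq> {..<2*m}" using phi_mod(2)[OF p' Usub[OF u]] v by auto
      moreover have "Gc m c v" using u p' v unfolding Gc_def Tr_def U_def by blast
      moreover have "\<forall>j\<in>v. x j" using p v by (auto simp: PiE_def Pi_def)
      ultimately show "v \<in> {v. v \<subseteq> {..<2*m} \<and> Gc m c v \<and> (\<forall>j\<in>v. x j)}" by blast
    qed
  qed
  have sub: "PiE u (\<lambda>i. {j \<in> {i, i + m}. x j}) \<subseteq> PiE u (\<lambda>i. {i, i + m})" for u
    by (auto simp: PiE_def Pi_def)
  have finU2: "finite u" if "u \<in> U" for u using Usub[OF that] finite_subset by blast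
  have cardImg: "card (Img u) = (\<Prod>i\<in>u. card {j \<in> {i, i + m}. x j})" if "u \<in> U" for u
  proof -
    have "inj_on (\<lambda>\<phi>. \<phi> ` u) (PiE u (\<lambda>i. {j \<in> {i, i + m}. x j}))"
      using inj_on_subset[OF PiE_img_inj[OF Usub[OF that]] sub] .
    then have "card (Img u) = card (PiE u (\<lambda>i. {j \<in> {i, i + m}. x j}))"
      unfolding Img_def by (rule card_image)
    also have "\<dots> = (\<Prod>i\<in>u. card {j \<in> {i, i + m}. x j})" using finU2[OF that] by (rule card_PiE)
    finally show ?thesis .
  qed
  have finImg: "finite (Img u)" if "u \<in> U" for u
    unfolding Img_def using finU2[OF that] by (intro finite_imageI finite_PiE) auto
  have disj: "Img u \<inter> Img u' = {}" if "u \<in> U" "u' \<in> U" "u \<noteq> u'" for u u'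
  proof (rule ccontr)
    assume "Img u \<inter> Img u' \<noteq> {}"
    then obtain \<phi> \<psi> where p: "\<phi> \<in> PiE u (\<lambda>i. {j \<in> {i, i + m}. x j})" and q: "\<psi> \<in> PiE u' (\<lambda>i. {j \<in> {i, i + m}. x j})"
      and e: "\<phi> ` u = \<psi> ` u'" unfolding Img_def by auto
    have "u = (\<lambda>j. j mod m) ` (\<phi> ` u)" using img_mod[OF subsetD[OF sub p] Usub[OF that(1)]] by simp
    also have "\<dots> = (\<lambda>j. j mod m) ` (\<psi> ` u')" using e by simp
    also have "\<dots> = u'" using img_mod[OF subsetD[OF sub q] Usub[OF that(2)]] by simp
    finally show False using that(3) by simp
  qed
  have "card (\<Union>u\<in>U. Img u) = (\<Sum>u\<in>U. card (Img u))"
    by (rule card_UN_disjoint[OF finU]) (use finImg disj in auto)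
  then have "anf_eval (2*m) (Gc m c) x = odd (\<Sum>u\<in>U. card (Img u))"
    unfolding anf_eval_def eq by simp
  also have "\<dots> = odd (card {u\<in>U. odd (card (Img u))})" by (rule odd_sum_card[OF finU])
  also have "{u\<in>U. odd (card (Img u))} = {u. u \<subseteq> {..<m} \<and> c u \<and> (\<forall>i\<in>u. (\<lambda>i. if i < m then x i \<noteq> x (i + m) else False) i)}"
  proof -
    have key: "odd (card (Img u)) = (\<forall>i\<in>u. (\<lambda>i. if i < m then x i \<noteq> x (i + m) else False) i)" if "u \<in> U" for u
    proof -
      have "odd (card (Img u)) = (\<forall>i\<in>u. odd (card {j \<in> {i, i + m}. x j}))"
        unfolding cardImg[OF that] by (simp add: even_prod_iff[OF finU2[OF that]])
      also have "\<dots> = (\<forall>i\<in>u. (\<lambda>i. if i < m then x i \<noteq> x (i + m) else False) i)"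
      proof (rule ball_cong[OF refl])
        fix i assume "i \<in> u"
        then have "i < m" using Usub[OF that] by auto
        then show "odd (card {j \<in> {i, i + m}. x j}) = (\<lambda>i. if i < m then x i \<noteq> x (i + m) else False) i"
          using card_pair_x[OF \<open>i < m\<close>, of x] by simp
      qed
      finally show ?thesis .
    qed
    show ?thesis
    proof (rule set_eqI)
      fix u
      show "u \<in> {u\<in>U. odd (card (Img u))} \<longleftrightarrow> u \<in> {u. u \<subseteq> {..<m} \<and> c u \<and> (\<forall>i\<in>u. (\<lambda>i. if i < m then x i \<noteq> x (i + m) else False) i)}"
      proof (cases "c u")
        case True
        then have "u \<in> U" unfolding U_def by simp
        then show ?thesis using key[of u] Usub[of u] True by simp
      next
        case False then show ?thesis unfolding U_def by simp
      qed
    qed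
  qed
  finally show ?thesis unfolding anf_eval_def by simp
qed



lemma C_is_anf:
  assumes anf: "is_anf m c"
  shows "is_anf (2*m) (\<lambda>v. Qc m v \<noteq> Gc m c v)"
  unfolding is_anf_def
proof (intro allI impI)
  fix v assume "Qc m v \<noteq> Gc m c v"
  then have "Qc m v \<or> Gc m c v" by blast
  then show "v \<subseteq> {..<2*m}"
  proof
    assume "Qc m v" then show ?thesis unfolding Qc_def by auto
  next
    assume "Gc m c v"
    then obtain u \<phi> where u: "c u" and p: "\<phi> \<in> PiE u (\<lambda>i. {i, i + m})" and v: "v = \<phi> ` u"
      unfolding Gc_def Tr_def by auto
    have "u \<subseteq> {..<m}" using anf u unfolding is_anf_def by blast
    then show ?thesis using phi_mod(2)[OF p] v by auto
  qed
qed

lemma QG_disj: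
  assumes anf: "is_anf m c" and m: "m \<ge> 1"
  shows "\<not> (Qc m v \<and> Gc m c v)"
proof
  assume "Qc m v \<and> Gc m c v"
  then obtain i where i: "i < m" "v = {i, i + m}" unfolding Qc_def by auto
  from \<open>Qc m v \<and> Gc m c v\<close> obtain u \<phi> where u: "c u" and p: "\<phi> \<in> PiE u (\<lambda>i. {i, i + m})" and v: "v = \<phi> ` u"
    unfolding Gc_def Tr_def by auto
  have us: "u \<subseteq> {..<m}" using anf u unfolding is_anf_def by blast
  have "u = (\<lambda>j. j mod m) ` v" using img_mod[OF p us] v by simp
  also have "\<dots> = {i}" using i by simp
  finally have "u = {i}" .
  then have "card v \<le> 1" using v by simp
  moreover have "card v = 2" using i m by simp
  ultimately show False by simp
qed

lemma card_G:
  assumes anf: "is_anf m c"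
  shows "card ` {v. Gc m c v} = card ` {u. c u}"
proof
  show "card ` {v. Gc m c v} \<subseteq> card ` {u. c u}"
  proof
    fix k assume "k \<in> card ` {v. Gc m c v}"
    then obtain v where "Gc m c v" "k = card v" by auto
    then obtain u \<phi> where u: "c u" and p: "\<phi> \<in> PiE u (\<lambda>i. {i, i + m})" and v: "v = \<phi> ` u" and k: "k = card v"
      unfolding Gc_def Tr_def by auto
    have us: "u \<subseteq> {..<m}" using anf u unfolding is_anf_def by blast
    have "k = card u" using k v card_image[OF phi_inj[OF p us]] by simp
    then show "k \<in> card ` {u. c u}" using u by auto
  qed
  show "card ` {u. c u} \<subseteq> card ` {v. Gc m c v}"
  proof
    fix k assume "k \<in> card ` {u. c u}"
    then obtain u where u: "c u" and k: "k = card u" by auto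
    have "u \<in> Tr m u" unfolding Tr_def
      by (rule rev_image_eqI[where x="restrict (\<lambda>i. i) u"]) auto
    then have "Gc m c u" using u unfolding Gc_def by blast
    then show "k \<in> card ` {v. Gc m c v}" using k by blast
  qed
qed

lemma degree_part:
  fixes m n d :: nat and c :: "nat set \<Rightarrow> bool" and f :: "(nat \<Rightarrow> bool) \<Rightarrow> bool"
  assumes m: "m \<ge> 1" and n: "n = 2 * m"
    and anf: "is_anf m c" and d: "d = anf_degree c"
    and f: "\<And>x. f x = (odd (card {i. i < m \<and> x i \<and> x (i + m)})
                 \<noteq> anf_eval m c (\<lambda>i. if i < m then x i \<noteq> x (i + m) else False))"
    and d2: "d \<ge> 2"
  shows "alg_degree n f = d"
proof -
  define C' where "C' = (\<lambda>v. Qc m v \<noteq> Gc m c v)"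
  have ev: "anf_eval n C' x = f x" for x
  proof -
    have "anf_eval n C' x = (anf_eval n (Qc m) x \<noteq> anf_eval n (Gc m c) x)"
      unfolding C'_def by (rule anf_eval_xor)
    then show ?thesis unfolding f[of x] n Q_eval[OF m] G_eval[OF anf] by simp
  qed
  have "anf_of n f = C'"
    by (rule anf_of_eq) (use C_is_anf[OF anf] ev n in \<open>auto simp: C'_def\<close>)
  then have ad: "alg_degree n f = anf_degree C'" unfolding alg_degree_def by simp
  have setC: "{v. C' v} = {v. Qc m v} \<union> {v. Gc m c v}"
    unfolding C'_def using QG_disj[OF anf m] by auto
  have cQ: "card ` {v. Qc m v} = {2}"
  proof
    show "card ` {v. Qc m v} \<subseteq> {2}" unfolding Qc_def by auto
    have "{0, 0 + m} \<in> {v. Qc m v}" unfolding Qc_def using m by (intro CollectI exI[of _ 0]) auto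
    moreover have "card {0, 0 + m} = 2" using m by simp
    ultimately show "{2} \<subseteq> card ` {v. Qc m v}" by (metis empty_subsetI image_eqI insert_subset)
  qed
  define A where "A = card ` {u. c u}"
  have finA: "finite A" unfolding A_def
    by (rule finite_imageI, rule finite_subset[of _ "Pow {..<m}"]) (use anf in \<open>auto simp: is_anf_def\<close>)
  have "anf_degree C' = Max (insert 2 (insert 0 A))"
    unfolding anf_degree_def setC image_Un cQ card_G[OF anf] A_def[symmetric] by (simp add: insert_commute)
  also have "\<dots> = max 2 (Max (insert 0 A))" using finA by (simp add: Max_insert)
  also have "Max (insert 0 A) = d" unfolding d anf_degree_def A_def ..
  finally show ?thesis using ad d2 by simp
qed


theorem theorem1:
  fixes m n d :: nat and c :: "nat set \<Rightarrow> bool" and f :: "(nat \<Rightarrow> bool) \<Rightarrow> bool"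
  assumes "m \<ge> 1" and "n = 2 * m"
    and "is_anf m c" and "d = anf_degree c"
    and "\<And>x. f x = (odd (card {i. i < m \<and> x i \<and> x (i + m)})
                 \<noteq> anf_eval m c (\<lambda>i. if i < m then x i \<noteq> x (i + m) else False))"
  shows "bent n f
    \<and> (rotation_symmetric m (anf_eval m c) \<longrightarrow> rotation_symmetric n f \<and> bent n f)
    \<and> (d \<ge> 2 \<longrightarrow> alg_degree n f = d)"
proof -
  have b: "bent n f" by (rule bent_gen[OF assms(2) assms(5)])
  have r: "rotation_symmetric m (anf_eval m c) \<longrightarrow> rotation_symmetric n f"
    using rot_gen[OF assms(1) assms(2) assms(5)] by blast
  have d: "d \<ge> 2 \<longrightarrow> alg_degree n f = d"
    using degree_part[OF assms(1) assms(2) assms(3) assms(4) assms(5)] by blast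
  show ?thesis using b r d by blast
qed

end
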